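(* In the setting below, the action of $G_M$ on $\mathbb H\times\mathbb C^n$ is free and properly discontinuous.
   Context: Let $n\ge 1$ and let $M=(m_{ij})\in SL(2n+1,\mathbb Z)$. Assume that $M$ has exactly one real eigenvalue $\alpha$, that $\alpha>0$, $\alpha\neq 1$, that $\alpha$ is a simple eigenvalue, and that the remaining eigenvalues are $\beta_1,\dots,\beta_k,\bar\beta_1,\dots,\bar\beta_k$ with $\mathrm{Im}\,\beta_j>0$. Let $W\subset\mathbb C^{2n+1}$ be the direct sum of the generalized eigenspaces of $M$ for $\beta_1,\dots,\beta_k$ (so $\dim_{\mathbb C}W=n$). Fix a real eigenvector $a=(a^{(1)},\dots,a^{(2n+1)})^\top\in\mathbb R^{2n+1}$ of $M$ for $\alpha$ and a basis $b_1,\dots,b_n$ of $W$, $b_j=(b_j^{(1)},\dots,b_j^{(2n+1)})^\top$, and let $R=(r_{\ell j})\in M_n(\mathbb C)$ be given by $Mb_j=\sum_{\ell=1}^n r_{\ell j}b_\ell$. For $i=1,\dots,2n+1$ put $u_i=(a^{(i)},b_1^{(i)},\dots,b_n^{(i)})^\top\in\mathbb R\times\mathbb C^n$. Let $\mathbb H=\{w\in\mathbb C:\mathrm{Im}\,w>0\}$, and define holomorphic automorphisms of $\mathbb H\times\mathbb C^n$ by $g_0(w,z)=(\alpha w,R^\top z)$ and $g_i(w,z)=(w,z)+u_i$ for $1\le i\le 2n+1$. Let $G_M$ be the group generated by $g_0,\dots,g_{2n+1}$. *)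

theory Defs
  imports "HOL-Analysis.Analysis" "HOL-Computational_Algebra.Polynomial"
    "HOL-Algebra.Bij" "HOL-Algebra.Generated_Groups"
begin

text \<open>Integer matrix viewed over the complex / real numbers.\<close>
definition cmat :: "int^'m^'m \<Rightarrow> complex^'m^'m" where
  "cmat M = (\<chi> i j. of_int (M $ i $ j))"

definition rmat :: "int^'m^'m \<Rightarrow> real^'m^'m" where
  "rmat M = (\<chi> i j. of_int (M $ i $ j))"

text \<open>(Complex) eigenvalues of a complex square matrix.\<close>
definition mat_eigenvalue :: "complex^'m^'m \<Rightarrow> complex \<Rightarrow> bool" where
  "mat_eigenvalue A l \<longleftrightarrow> (\<exists>v. v \<noteq> 0 \<and> A *v v = l *s v)"

text \<open>Characteristic polynomial det(x I - A).\<close>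
definition charpoly :: "complex^'m^'m \<Rightarrow> complex poly" where
  "charpoly A = det (\<chi> i j. (if i = j then [:0, 1:] else 0) - [:A $ i $ j:])"

text \<open>Generalized eigenspace ker (A - l I)^m, m the size of the matrix.\<close>
definition gen_eigenspace :: "complex^'m^'m \<Rightarrow> complex \<Rightarrow> (complex^'m) set" where
  "gen_eigenspace A l = {v. ((\<lambda>x. A *v x - l *s x) ^^ CARD('m)) v = 0}"

text \<open>Direct sum (= complex span of the union) of the generalized eigenspaces
  for the eigenvalues with positive imaginary part.\<close>
definition upper_space :: "complex^'m^'m \<Rightarrow> (complex^'m) set" where
  "upper_space A = vec.span (\<Union> {gen_eigenspace A \<beta> | \<beta>. mat_eigenvalue A \<beta> \<and> Im \<beta> > 0})"

text \<open>The domain H x C^n.\<close>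
definition HC :: "(complex \<times> (complex^'n)) set" where
  "HC = {(w, z). Im w > 0}"

text \<open>The generators g_0 and g_i (i indexes the coordinates of C^(2n+1)).\<close>
definition gen0 :: "real \<Rightarrow> complex^'n^'n \<Rightarrow> complex \<times> (complex^'n) \<Rightarrow> complex \<times> (complex^'n)" where
  "gen0 \<alpha> R = (\<lambda>(w, z). (complex_of_real \<alpha> * w, transpose R *v z))"

definition uvec :: "real^'m \<Rightarrow> ('n \<Rightarrow> complex^'m) \<Rightarrow> 'm \<Rightarrow> complex \<times> (complex^'n)" where
  "uvec a b i = (complex_of_real (a $ i), (\<chi> j. b j $ i))"

definition gentr :: "real^'m \<Rightarrow> ('n \<Rightarrow> complex^'m) \<Rightarrow> 'm \<Rightarrow> complex \<times> (complex^'n) \<Rightarrow> complex \<times> (complex^'n)" where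
  "gentr a b i = (\<lambda>p. p + uvec a b i)"

text \<open>The group G_M, as the subgroup of the group of bijections of H x C^n
  generated by g_0, g_1, ..., g_(2n+1).\<close>
definition GM :: "real \<Rightarrow> complex^'n^'n \<Rightarrow> real^'m \<Rightarrow> ('n \<Rightarrow> complex^'m)
    \<Rightarrow> (complex \<times> (complex^'n) \<Rightarrow> complex \<times> (complex^'n)) set" where
  "GM \<alpha> R a b = generate (BijGroup HC)
     (insert (restrict (gen0 \<alpha> R) HC) ((\<lambda>i. restrict (gentr a b i) HC) ` UNIV))"

text \<open>Free action: only the identity has a fixed point.\<close>
definition free_action :: "'a set \<Rightarrow> ('a \<Rightarrow> 'a) set \<Rightarrow> bool" where
  "free_action X G \<longleftrightarrow> (\<forall>g\<in>G. \<forall>p\<in>X. g p = p \<longrightarrow> g = (\<lambda>x\<in>X. x))"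

text \<open>Properly discontinuous action: for every compact K in X only finitely many
  group elements g satisfy gK \<inter> K \<noteq> {}.\<close>
definition properly_discontinuous :: "'a::topological_space set \<Rightarrow> ('a \<Rightarrow> 'a) set \<Rightarrow> bool" where
  "properly_discontinuous X G \<longleftrightarrow>
     (\<forall>K. compact K \<and> K \<subseteq> X \<longrightarrow> finite {g \<in> G. g ` K \<inter> K \<noteq> {}})"

end

theory Submission
  imports Defs
begin

definition ipow :: "('a \<Rightarrow> 'a) \<Rightarrow> ('a \<Rightarrow> 'a) \<Rightarrow> int \<Rightarrow> 'a \<Rightarrow> 'a" where
  "ipow f g k = (if 0 \<le> k then f ^^ nat k else g ^^ nat (- k))"

lemma ipow_0[simp]: "ipow f g 0 = id"
  by (simp add: ipow_def)

lemma ipow_succ: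
  assumes fg: "f \<circ> g = id"
  shows "ipow f g (k + 1) = f \<circ> ipow f g k"
proof (cases "0 \<le> k")
  case True
  then have "nat (k + 1) = Suc (nat k)" by simp
  then show ?thesis using True by (simp add: ipow_def)
next
  case False
  define n where "n = nat (-(k+1))"
  have A: "ipow f g (k+1) = g ^^ n"
    by (cases "k = -1") (use False in \<open>auto simp: ipow_def n_def\<close>)
  have B: "ipow f g k = g ^^ Suc n" using False by (simp add: ipow_def n_def nat_diff_distrib)
  have "f \<circ> g ^^ Suc n = (f \<circ> g) \<circ> g ^^ n" by (simp only: funpow.simps(2) o_assoc)
  then show ?thesis using A B fg by (simp only: id_o)
qed

lemma ipow_pred:
  assumes fg: "f \<circ> g = id" and gf: "g \<circ> f = id"
  shows "ipow f g (k - 1) = g \<circ> ipow f g k"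
proof -
  have "ipow f g k = f \<circ> ipow f g (k - 1)"
    using ipow_succ[OF fg, of "k - 1"] by (simp only: diff_add_cancel)
  then have "g \<circ> ipow f g k = (g \<circ> f) \<circ> ipow f g (k - 1)" by (simp only: o_assoc)
  then show ?thesis using gf by (simp only: id_o)
qed

lemma ipow_add:
  assumes fg: "f \<circ> g = id" and gf: "g \<circ> f = id"
  shows "ipow f g (k + l) = ipow f g k \<circ> ipow f g l"
proof (induction k rule: int_induct[where k = 0])
  case base
  then show ?case by simp
next
  case (step1 i)
  have "ipow f g (i + 1 + l) = f \<circ> ipow f g (i + l)"
  proof -
    have "i + 1 + l = (i + l) + 1" by simp
    then show ?thesis using ipow_succ[OF fg, of "i + l"] by (simp only:)
  qed
  also have "\<dots> = ipow f g (i + 1) \<circ> ipow f g l"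
    using step1 ipow_succ[OF fg, of i] by (simp add: fun_eq_iff)
  finally show ?case .
next
  case (step2 i)
  have "ipow f g (i - 1 + l) = g \<circ> ipow f g (i + l)"
  proof -
    have "i - 1 + l = (i + l) - 1" by simp
    then show ?thesis using ipow_pred[OF fg gf, of "i + l"] by (simp only:)
  qed
  also have "\<dots> = ipow f g (i - 1) \<circ> ipow f g l"
    using step2 ipow_pred[OF fg gf, of i] by (simp add: fun_eq_iff)
  finally show ?case .
qed

lemma funpow_closed:
  assumes "P f" "P id" "\<And>u v. P u \<Longrightarrow> P v \<Longrightarrow> P (u \<circ> v)"
  shows "P (f ^^ n)"
  proof (induction n)
  case 0 then show ?case using assms(2) unfolding funpow.simps(1) .
next
  case (Suc n) then show ?case using assms(1,3) unfolding funpow.simps(2) by blast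
qed

lemma ipow_closed:
  assumes "P f" "P g" "P id" "\<And>u v. P u \<Longrightarrow> P v \<Longrightarrow> P (u \<circ> v)"
  shows "P (ipow f g k)"
  unfolding ipow_def using funpow_closed[of P f] funpow_closed[of P g] assms by auto

lemma ipow_pres:
  assumes "\<And>x. Q x \<Longrightarrow> Q (f x)" "\<And>x. Q x \<Longrightarrow> Q (g x)" "Q x"
  shows "Q (ipow f g k x)"
proof -
  have "\<forall>x. Q x \<longrightarrow> Q (ipow f g k x)"
    by (rule ipow_closed[where P = "\<lambda>u. \<forall>x. Q x \<longrightarrow> Q (u x)"]) (use assms in auto)
  then show ?thesis using assms by blast
qed

lemma det_of_int_mat:
  fixes M :: "int^'m::finite^'m"
  shows "det ((\<chi> i j. of_int (M $ i $ j)) :: 'a::comm_ring_1^'m^'m) = of_int (det M)"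
  by (simp add: det_def of_int_sum of_int_prod)

lemma det_Ints:
  fixes A :: "real^'m::finite^'m"
  assumes "\<And>i j. A $ i $ j \<in> \<int>"
  shows "det A \<in> \<int>"
  unfolding det_def using assms
  by (intro Ints_sum Ints_mult Ints_prod) auto

locale setting =
  fixes M :: "int^'m::finite^'m" and \<alpha> :: real and a :: "real^'m"
    and b :: "'n::finite \<Rightarrow> complex^'m" and R :: "complex^'n^'n"
  assumes dim: "CARD('m) = 2 * CARD('n) + 1"
    and SL: "det M = 1"
    and alpha_pos: "\<alpha> > 0" and alpha_ne1: "\<alpha> \<noteq> 1"
    and a_nz: "a \<noteq> 0" and a_eig: "rmat M *v a = \<alpha> *s a"
    and b_inj: "inj b" and b_indep: "vec.independent (range b)"
    and b_span: "vec.span (range b) = upper_space (cmat M)"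
    and R_def: "\<forall>j. cmat M *v b j = (\<Sum>l\<in>UNIV. R $ l $ j *s b l)"
begin

lemma det_cmat: "det (cmat M) = 1"
  using det_of_int_mat[of M, where 'a=complex] SL by (simp add: cmat_def)

lemma det_rmat: "det (rmat M) = 1"
  using det_of_int_mat[of M, where 'a=real] SL by (simp add: rmat_def)

lemma b_coef_zero:
  assumes "(\<Sum>j\<in>UNIV. c j *s b j) = 0"
  shows "c j = 0"
proof -
  have fin: "finite (range b)" by simp
  define u where "u v = c (inv_into UNIV b v)" for v
  have "(\<Sum>v\<in>range b. u v *s v) = (\<Sum>j\<in>UNIV. u (b j) *s b j)"
    by (subst sum.reindex) (use b_inj in \<open>auto simp: inj_on_def\<close>)
  also have "\<dots> = 0" using assms b_inj by (simp add: u_def)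
  finally have "(\<Sum>v\<in>range b. u v *s v) = 0" .
  then have "\<forall>v\<in>range b. u v = 0"
    using b_indep vec.dependent_finite[OF fin] by blast
  then show ?thesis using b_inj by (auto simp: u_def)
qed

lemma cmat_sum_b:
  "cmat M *v (\<Sum>j\<in>UNIV. x $ j *s b j) = (\<Sum>l\<in>UNIV. (R *v x) $ l *s b l)"
proof -
  have "cmat M *v (\<Sum>j\<in>UNIV. x $ j *s b j) = (\<Sum>j\<in>UNIV. x $ j *s (cmat M *v b j))"
    by (simp add: vec.linear_sum[OF matrix_vector_mul_linear_gen] vec.linear_scale[OF matrix_vector_mul_linear_gen])
  also have "\<dots> = (\<Sum>j\<in>UNIV. \<Sum>l\<in>UNIV. (x $ j * R $ l $ j) *s b l)"
    using R_def by (simp add: vec.scale_sum_right)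
  also have "\<dots> = (\<Sum>l\<in>UNIV. \<Sum>j\<in>UNIV. (x $ j * R $ l $ j) *s b l)"
    by (rule sum.swap)
  also have "\<dots> = (\<Sum>l\<in>UNIV. (R *v x) $ l *s b l)"
    by (simp add: matrix_vector_mult_def vec.scale_sum_left mult.commute)
  finally show ?thesis .
qed

lemma cmat_inj: "inj ((*v) (cmat M))"
  using det_nz_iff_inj_gen[of "(*v) (cmat M)"] det_cmat by simp

lemma R_inj: "inj ((*v) R)"
proof -
  have "x = 0" if "R *v x = 0" for x
  proof -
    have "cmat M *v (\<Sum>j\<in>UNIV. x $ j *s b j) = 0"
      using cmat_sum_b[of x] that by simp
    then have "(\<Sum>j\<in>UNIV. x $ j *s b j) = 0"
      using cmat_inj by (metis matrix_vector_mult_0_right injD)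
    then show "x = 0" using b_coef_zero[of "\<lambda>j. x $ j"] by (simp add: vec_eq_iff)
  qed
  then show ?thesis
    by (metis (no_types, lifting) injI eq_iff_diff_eq_0 matrix_vector_mult_diff_distrib)
qed

definition L where "L = transpose R"

lemma L_invertible: "invertible L"
proof -
  have "det R \<noteq> 0" using det_nz_iff_inj_gen[of "(*v) R"] R_inj by simp
  then show ?thesis by (simp add: L_def invertible_det_nz)
qed

definition Linv where "Linv = (SOME B. L ** B = mat 1 \<and> B ** L = mat 1)"

lemma Linv: "L ** Linv = mat 1" "Linv ** L = mat 1"
proof -
  have "\<exists>B. L ** B = mat 1 \<and> B ** L = mat 1" using L_invertible by (simp add: invertible_def)
  from someI_ex[OF this] show "L ** Linv = mat 1" "Linv ** L = mat 1" by (auto simp: Linv_def)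
qed

lemma L_Linv[simp]: "L *v (Linv *v z) = z" "Linv *v (L *v z) = z"
  by (simp_all add: matrix_vector_mul_assoc Linv)

end

lemma cscale: "r *\<^sub>R (z::complex) = of_real r * z"
  by (simp add: scaleR_conv_of_real)

context setting begin

definition D :: "complex \<times> (complex^'n) \<Rightarrow> complex \<times> (complex^'n)" where
  "D p = (of_real \<alpha> * fst p, L *v snd p)"

definition Dinv :: "complex \<times> (complex^'n) \<Rightarrow> complex \<times> (complex^'n)" where
  "Dinv p = (fst p / of_real \<alpha>, Linv *v snd p)"

lemma D_Dinv: "D \<circ> Dinv = id" "Dinv \<circ> D = id"
  using alpha_pos by (auto simp: fun_eq_iff D_def Dinv_def)

definition Dp where "Dp k = ipow D Dinv k"

lemma Dp_add: "Dp (k + l) = Dp k \<circ> Dp l"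
  unfolding Dp_def by (rule ipow_add[OF D_Dinv])

lemma Dp_0[simp]: "Dp 0 = id"
  by (simp add: Dp_def)

lemma Dp_succ: "Dp (k + 1) = D \<circ> Dp k"
  unfolding Dp_def by (rule ipow_succ[OF D_Dinv(1)])

lemma Dp_pred: "Dp (k - 1) = Dinv \<circ> Dp k"
  unfolding Dp_def by (rule ipow_pred[OF D_Dinv])

lemma Dp_fst: "fst (Dp k p) = of_real (\<alpha> powi k) * fst p"
proof (induction k rule: int_induct[where k = 0])
  case base then show ?case by simp
next
  case (step1 i)
  have "\<alpha> powi (i + 1) = \<alpha> * \<alpha> powi i" using alpha_pos by (simp add: power_int_add)
  then show ?case using step1 by (simp add: Dp_succ D_def)
next
  case (step2 i)
  have "\<alpha> powi (i - 1) = \<alpha> powi i / \<alpha>" using alpha_pos by (simp add: power_int_diff)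
  then show ?case using step2 by (simp add: Dp_pred Dinv_def)
qed

lemma linear_matvec_real: "linear (\<lambda>z::complex^'n. (A::complex^'n^'k) *v z)"
proof (rule linearI)
  show "A *v (x + y) = A *v x + A *v y" for x y by (simp add: matrix_vector_right_distrib)
  show "A *v (r *\<^sub>R x) = r *\<^sub>R (A *v x)" for r x
    by (simp add: vec_eq_iff matrix_vector_mult_def cscale sum_distrib_left algebra_simps)
qed

lemma linear_D: "linear D"
proof -
  have "linear (\<lambda>p::complex \<times> (complex^'n). (of_real \<alpha> * fst p, L *v snd p))"
    using linear_matvec_real[of L]
    by (intro linearI) (auto simp: linear_add linear_scale algebra_simps cscale)
  then show ?thesis by (simp add: D_def[abs_def])
qed

lemma linear_Dinv: "linear Dinv"
proof -
  have "linear (\<lambda>p::complex \<times> (complex^'n). (fst p / of_real \<alpha>, Linv *v snd p))"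
    using linear_matvec_real[of Linv]
    by (intro linearI) (auto simp: linear_add linear_scale algebra_simps cscale add_divide_distrib)
  then show ?thesis by (simp add: Dinv_def[abs_def])
qed

lemma linear_Dp: "linear (Dp k)"
  unfolding Dp_def
  by (rule ipow_closed[where P = linear]) (auto intro: linear_D linear_Dinv linear_compose bounded_linear.linear[OF bounded_linear_ident] simp: id_def)

definition phi :: "real^'m \<Rightarrow> complex \<times> (complex^'n)" where
  "phi x = (\<Sum>i\<in>UNIV. x $ i *\<^sub>R uvec a b i)"

lemma linear_phi: "linear phi"
  unfolding phi_def
  by (rule linearI) (simp_all add: sum.distrib scaleR_add_left scaleR_sum_right)

lemma fst_phi: "fst (phi x) = of_real (\<Sum>i\<in>UNIV. x $ i * a $ i)"
  by (simp add: phi_def fst_sum uvec_def cscale)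

lemma snd_phi: "snd (phi x) $ j = (\<Sum>i\<in>UNIV. of_real (x $ i) * b j $ i)"
  by (simp add: phi_def snd_sum uvec_def cscale sum_component)

lemma D_uvec: "D (uvec a b i) = (\<Sum>k\<in>UNIV. real_of_int (M $ i $ k) *\<^sub>R uvec a b k)"
proof (rule prod_eqI)
  have "(rmat M *v a) $ i = \<alpha> * a $ i" using a_eig by simp
  then have "(\<Sum>k\<in>UNIV. of_int (M $ i $ k) * a $ k) = \<alpha> * a $ i"
    by (simp add: matrix_vector_mult_def rmat_def)
  then have e: "complex_of_real (\<alpha> * a $ i) = (\<Sum>k\<in>UNIV. complex_of_int (M $ i $ k) * complex_of_real (a $ k))"
    by (metis (no_types, lifting) of_real_mult of_real_of_int_eq of_real_sum sum.cong)
  show "fst (D (uvec a b i)) = fst (\<Sum>k\<in>UNIV. real_of_int (M $ i $ k) *\<^sub>R uvec a b k)"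
    using e by (simp add: D_def uvec_def fst_sum cscale)
  show "snd (D (uvec a b i)) = snd (\<Sum>k\<in>UNIV. real_of_int (M $ i $ k) *\<^sub>R uvec a b k)"
  proof (subst vec_eq_iff, intro allI)
    fix j
    have "(cmat M *v b j) $ i = (\<Sum>l\<in>UNIV. R $ l $ j *s b l) $ i" using R_def by simp
    then have "(\<Sum>k\<in>UNIV. of_int (M $ i $ k) * b j $ k) = (\<Sum>l\<in>UNIV. R $ l $ j * b l $ i)"
      by (simp add: matrix_vector_mult_def cmat_def sum_component)
    then show "snd (D (uvec a b i)) $ j = snd (\<Sum>k\<in>UNIV. real_of_int (M $ i $ k) *\<^sub>R uvec a b k) $ j"
      by (simp add: D_def uvec_def snd_sum sum_component L_def matrix_vector_mult_def
          transpose_def cscale)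
  qed
qed

lemma D_phi: "D (phi x) = phi (transpose (rmat M) *v x)"
proof -
  have "D (phi x) = (\<Sum>i\<in>UNIV. x $ i *\<^sub>R D (uvec a b i))"
    unfolding phi_def by (simp add: linear_sum[OF linear_D] linear_scale[OF linear_D])
  also have "\<dots> = (\<Sum>i\<in>UNIV. \<Sum>k\<in>UNIV. (x $ i * real_of_int (M $ i $ k)) *\<^sub>R uvec a b k)"
    by (simp add: D_uvec scaleR_sum_right)
  also have "\<dots> = (\<Sum>k\<in>UNIV. \<Sum>i\<in>UNIV. (x $ i * real_of_int (M $ i $ k)) *\<^sub>R uvec a b k)"
    by (rule sum.swap)
  also have "\<dots> = phi (transpose (rmat M) *v x)"
    by (simp add: phi_def matrix_vector_mult_def transpose_def rmat_def scaleR_sum_left mult.commute)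
  finally show ?thesis .
qed

definition Zv :: "(real^'m) set" where "Zv = {x. \<forall>i. x $ i \<in> \<int>}"

lemma Zv_M: "x \<in> Zv \<Longrightarrow> transpose (rmat M) *v x \<in> Zv"
  by (auto simp: Zv_def matrix_vector_mult_def transpose_def rmat_def intro!: Ints_sum Ints_mult)

lemma Zv_Minv:
  assumes "y \<in> Zv"
  shows "\<exists>x\<in>Zv. transpose (rmat M) *v x = y"
proof -
  let ?A = "transpose (rmat M)"
  have d: "det ?A = 1" by (simp add: det_rmat)
  define x where "x = (\<chi> k. det (\<chi> i j. if j = k then y $ i else ?A $ i $ j) / det ?A)"
  have "?A *v x = y" using cramer[of ?A x y] d by (simp add: x_def)
  moreover have "x \<in> Zv"
    unfolding Zv_def x_def using d assms
    by (auto simp: Zv_def transpose_def rmat_def intro!: det_Ints)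
  ultimately show ?thesis by blast
qed

definition Lam where "Lam = phi ` Zv"

lemma Lam_D: "v \<in> Lam \<Longrightarrow> D v \<in> Lam"
proof -
  assume "v \<in> Lam" then obtain x where "x \<in> Zv" "v = phi x" by (auto simp: Lam_def)
  then show ?thesis using Zv_M[of x] unfolding Lam_def by (metis D_phi image_eqI)
qed

lemma Lam_Dinv: "v \<in> Lam \<Longrightarrow> Dinv v \<in> Lam"
proof -
  assume "v \<in> Lam"
  then obtain y where y: "y \<in> Zv" "v = phi y" by (auto simp: Lam_def)
  then obtain x where x: "x \<in> Zv" "transpose (rmat M) *v x = y" using Zv_Minv by blast
  have "Dinv v = Dinv (D (phi x))" using x y by (simp add: D_phi)
  also have "\<dots> = phi x" using D_Dinv(2) by (simp add: pointfree_idE)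
  finally show ?thesis using x by (simp add: Lam_def)
qed

lemma Lam_Dp: "v \<in> Lam \<Longrightarrow> Dp k v \<in> Lam"
  unfolding Dp_def by (rule ipow_pres[where Q = "\<lambda>v. v \<in> Lam"]) (auto intro: Lam_D Lam_Dinv)

lemma Lam_0: "0 \<in> Lam"
proof -
  have "(0::real^'m) \<in> Zv" by (simp add: Zv_def)
  then show ?thesis unfolding Lam_def using linear_0[OF linear_phi] by force
qed

lemma Lam_add: "v \<in> Lam \<Longrightarrow> w \<in> Lam \<Longrightarrow> v + w \<in> Lam"
proof -
  assume "v \<in> Lam" "w \<in> Lam"
  then obtain x y where "x \<in> Zv" "y \<in> Zv" "v = phi x" "w = phi y" by (auto simp: Lam_def)
  moreover have "x + y \<in> Zv" using calculation by (auto simp: Zv_def)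
  ultimately show ?thesis unfolding Lam_def using linear_add[OF linear_phi] by (metis image_eqI)
qed

lemma Lam_uminus: "v \<in> Lam \<Longrightarrow> - v \<in> Lam"
proof -
  assume "v \<in> Lam"
  then obtain x where "x \<in> Zv" "v = phi x" by (auto simp: Lam_def)
  moreover have "- x \<in> Zv" using calculation by (auto simp: Zv_def)
  ultimately show ?thesis unfolding Lam_def using linear_neg[OF linear_phi] by (metis image_eqI)
qed

lemma Lam_uvec: "uvec a b i \<in> Lam"
proof -
  define x where "x = (axis i 1 :: real^'m)"
  have "x \<in> Zv" by (auto simp: Zv_def x_def axis_def)
  moreover have "phi x = uvec a b i"
    by (simp add: phi_def x_def axis_def if_distrib[of "\<lambda>r. r *\<^sub>R _"] sum.delta cong: if_cong)
  ultimately show ?thesis unfolding Lam_def by (metis image_eqI)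
qed

lemma Lam_real: "v \<in> Lam \<Longrightarrow> Im (fst v) = 0"
  by (auto simp: Lam_def fst_phi)

end

section \<open>Generalized eigenspaces\<close>

lemma funpow_commute:
  assumes "\<And>x. f (g x) = g (f x)"
  shows "f ((g ^^ n) x) = (g ^^ n) (f x)"
  by (induction n) (simp_all add: assms)

definition Tm :: "complex^'m^'m \<Rightarrow> complex \<Rightarrow> complex^'m \<Rightarrow> complex^'m" where
  "Tm A l = (\<lambda>x. A *v x - l *s x)"

context fixes A :: "complex^'m::finite^'m" begin

lemma gen_eigenspace_Tm: "gen_eigenspace A l = {v. (Tm A l ^^ CARD('m)) v = 0}"
  by (simp add: gen_eigenspace_def Tm_def)

lemma linear_Tm: "Vector_Spaces.linear (*s) (*s) (Tm A l)"
proof -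
  have "Vector_Spaces.linear (*s) (*s) (\<lambda>x. A *v x - l *s x)"
    by (intro vec.linear_compose_sub matrix_vector_mul_linear_gen vec.linear_scale_self)
  then show ?thesis by (simp add: Tm_def)
qed

lemma linear_Tm_pow: "Vector_Spaces.linear (*s) (*s) (Tm A l ^^ n)"
  by (rule funpow_closed[where P = "Vector_Spaces.linear (*s) (*s)"])
    (auto intro: linear_Tm Vector_Spaces.linear_compose vec.linear_id)

lemma Tm_commute: "Tm A l (Tm A m x) = Tm A m (Tm A l x)"
proof -
  have s: "A *v (c *s y) = c *s (A *v y)" for c y
    using vec.linear_scale[OF matrix_vector_mul_linear_gen] by blast
  show ?thesis
    by (simp add: Tm_def matrix_vector_right_distrib matrix_vector_mult_diff_distrib
      vec.scale_right_diff_distrib s algebra_simps mult.commute)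
qed

lemma Tm_pres_gen:
  assumes "v \<in> gen_eigenspace A l"
  shows "Tm A m v \<in> gen_eigenspace A l"
proof -
  have "(Tm A l ^^ CARD('m)) (Tm A m v) = Tm A m ((Tm A l ^^ CARD('m)) v)"
    by (rule funpow_commute[symmetric]) (rule Tm_commute)
  also have "\<dots> = Tm A m 0" using assms by (simp add: gen_eigenspace_Tm)
  also have "\<dots> = 0" using vec.linear_0[OF linear_Tm] by simp
  finally show ?thesis by (simp add: gen_eigenspace_Tm)
qed

lemma Tm_pow_pres_gen:
  assumes "v \<in> gen_eigenspace A l"
  shows "(Tm A m ^^ k) v \<in> gen_eigenspace A l"
  by (induction k) (simp_all add: assms Tm_pres_gen)

lemma Tm_inj_gen:
  assumes "v \<in> gen_eigenspace A l" "m \<noteq> l" "Tm A m v = 0"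
  shows "v = 0"
proof -
  have Av: "A *v v = m *s v" using assms(3) by (simp add: Tm_def)
  have "(Tm A l ^^ k) v = ((m - l) ^ k) *s v" for k
  proof (induction k)
    case 0 then show ?case by simp
  next
    case (Suc k)
    have "(Tm A l ^^ Suc k) v = (Tm A l ^^ k) (Tm A l v)" by (simp add: funpow_swap1)
    also have "Tm A l v = (m - l) *s v" using Av by (simp add: Tm_def vec.scale_left_diff_distrib)
    also have "(Tm A l ^^ k) ((m - l) *s v) = (m - l) *s (Tm A l ^^ k) v"
      using vec.linear_scale[OF linear_Tm_pow] by blast
    finally show ?case using Suc by (simp add: mult.commute)
  qed
  then have "((m - l) ^ CARD('m)) *s v = 0" using assms(1) by (simp add: gen_eigenspace_Tm)
  then show ?thesis using assms(2) by simp
qed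

lemma Tm_pow_inj_gen:
  assumes "v \<in> gen_eigenspace A l" "m \<noteq> l" "(Tm A m ^^ k) v = 0"
  shows "v = 0"
  using assms
proof (induction k arbitrary: v)
  case 0 then show ?case by simp
next
  case (Suc k)
  have "(Tm A m ^^ k) (Tm A m v) = 0" using Suc.prems(3) by (simp add: funpow_swap1)
  then have "Tm A m v = 0" using Suc.IH[of "Tm A m v"] Suc.prems Tm_pres_gen by blast
  then show ?case using Tm_inj_gen Suc.prems by blast
qed

lemma gen_zero: "0 \<in> gen_eigenspace A l"
  using vec.linear_0[OF linear_Tm_pow] by (simp add: gen_eigenspace_Tm)

lemma gen_add: "x \<in> gen_eigenspace A l \<Longrightarrow> y \<in> gen_eigenspace A l \<Longrightarrow> x + y \<in> gen_eigenspace A l"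
  using vec.linear_add[OF linear_Tm_pow] by (simp add: gen_eigenspace_Tm)

lemma gen_scale: "x \<in> gen_eigenspace A l \<Longrightarrow> c *s x \<in> gen_eigenspace A l"
  using vec.linear_scale[OF linear_Tm_pow] by (simp add: gen_eigenspace_Tm)

lemma gen_direct:
  assumes "finite S" "\<forall>l\<in>S. v l \<in> gen_eigenspace A l" "(\<Sum>l\<in>S. v l) = 0"
  shows "\<forall>l\<in>S. v l = 0"
  using assms
proof (induction S arbitrary: v rule: finite_induct)
  case empty then show ?case by simp
next
  case (insert m S)
  let ?P = "Tm A m ^^ CARD('m)"
  have vm: "?P (v m) = 0" using insert.prems(1) by (simp add: gen_eigenspace_Tm)
  have "v m + (\<Sum>l\<in>S. v l) = 0" using insert.prems(2) insert.hyps by simp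
  then have "?P (v m) + (\<Sum>l\<in>S. ?P (v l)) = 0"
    using vec.linear_add[OF linear_Tm_pow] vec.linear_sum[OF linear_Tm_pow] vec.linear_0[OF linear_Tm_pow]
    by metis
  then have "(\<Sum>l\<in>S. ?P (v l)) = 0" using vm by simp
  moreover have "\<forall>l\<in>S. ?P (v l) \<in> gen_eigenspace A l"
    using insert.prems(1) Tm_pow_pres_gen by blast
  ultimately have "\<forall>l\<in>S. ?P (v l) = 0" using insert.IH[of "\<lambda>l. ?P (v l)"] by blast
  then have S0: "\<forall>l\<in>S. v l = 0"
    using insert.prems(1) insert.hyps(2) Tm_pow_inj_gen by (metis insertCI)
  then have "v m = 0" using \<open>v m + (\<Sum>l\<in>S. v l) = 0\<close> by simp
  then show ?case using S0 by simp
qed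

lemma span_gen_rep:
  assumes "w \<in> vec.span (\<Union> {gen_eigenspace A l | l. P l})"
  shows "\<exists>S v. finite S \<and> (\<forall>l\<in>S. P l \<and> v l \<in> gen_eigenspace A l) \<and> w = (\<Sum>l\<in>S. v l)"
  using assms
proof (induction rule: vec.span_induct_alt)
  case base
  then show ?case by (intro exI[of _ "{}"]) simp
next
  case (step c x y)
  then obtain l0 where l0: "P l0" "x \<in> gen_eigenspace A l0" by blast
  from step obtain S v where S: "finite S" "\<forall>l\<in>S. P l \<and> v l \<in> gen_eigenspace A l" "y = (\<Sum>l\<in>S. v l)"
    by blast
  define w0 where "w0 = (if l0 \<in> S then v l0 else 0)"
  define v' where "v' = v(l0 := c *s x + w0)"
  have w0: "w0 \<in> gen_eigenspace A l0" using S(2) gen_zero by (auto simp: w0_def)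
  have "y = w0 + (\<Sum>l\<in>S - {l0}. v l)"
    using S by (cases "l0 \<in> S") (simp_all add: w0_def sum.remove)
  moreover have "(\<Sum>l\<in>insert l0 S. v' l) = v' l0 + (\<Sum>l\<in>S - {l0}. v' l)"
    using S(1) by (simp add: sum.insert_remove)
  moreover have "(\<Sum>l\<in>S - {l0}. v' l) = (\<Sum>l\<in>S - {l0}. v l)"
    by (rule sum.cong) (auto simp: v'_def)
  ultimately have "c *s x + y = (\<Sum>l\<in>insert l0 S. v' l)"
    by (simp add: v'_def add.assoc)
  moreover have "\<forall>l\<in>insert l0 S. P l \<and> v' l \<in> gen_eigenspace A l"
    using S(2) l0 w0 by (auto simp: v'_def intro!: gen_add gen_scale)
  ultimately show ?case using S(1) by blast
qed

end

section \<open>Conjugation\<close>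

definition cv :: "complex^'m \<Rightarrow> complex^'m" where
  "cv v = (\<chi> i. cnj (v $ i))"

lemma cv_cv[simp]: "cv (cv v) = v" by (simp add: cv_def vec_eq_iff)
lemma cv_add[simp]: "cv (x + y) = cv x + cv y" by (simp add: cv_def vec_eq_iff)
lemma cv_diff[simp]: "cv (x - y) = cv x - cv y" by (simp add: cv_def vec_eq_iff)
lemma cv_zero[simp]: "cv 0 = 0" by (simp add: cv_def vec_eq_iff)
lemma cv_scale[simp]: "cv (c *s x) = cnj c *s cv x" by (simp add: cv_def vec_eq_iff)
lemma cv_eq0[simp]: "cv x = 0 \<longleftrightarrow> x = 0"
  by (metis cv_cv cv_zero)
lemma cv_sum: "cv (\<Sum>i\<in>I. f i) = (\<Sum>i\<in>I. cv (f i))"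
  by (induction I rule: infinite_finite_induct) simp_all

lemma cv_cmat: "cv (cmat M *v x) = cmat M *v cv x"
  by (simp add: cv_def vec_eq_iff matrix_vector_mult_def cmat_def)

lemma cv_Tm: "cv (Tm (cmat M) l x) = Tm (cmat M) (cnj l) (cv x)"
  by (simp add: Tm_def cv_cmat)

lemma cv_Tm_pow: "cv ((Tm (cmat M) l ^^ k) x) = (Tm (cmat M) (cnj l) ^^ k) (cv x)"
  by (induction k) (simp_all add: cv_Tm)

lemma cv_gen: "v \<in> gen_eigenspace (cmat M) l \<Longrightarrow> cv v \<in> gen_eigenspace (cmat M) (cnj l)"
  by (simp add: gen_eigenspace_Tm flip: cv_Tm_pow)

lemma lin_inj_surj_eucl:
  fixes f :: "'a::euclidean_space \<Rightarrow> 'b::euclidean_space"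
  assumes "linear f" "inj f" "DIM('a) = DIM('b)"
  shows "surj f"
  by (rule linear_injective_imp_surjective[OF assms(1,2)]) (simp add: assms(3))

context setting begin

definition ca :: "complex^'m" where "ca = (\<chi> i. complex_of_real (a $ i))"

lemma ca_nz: "ca \<noteq> 0"
  using a_nz by (auto simp: ca_def vec_eq_iff)

lemma ca_gen: "ca \<in> gen_eigenspace (cmat M) (complex_of_real \<alpha>)"
proof -
  have "(rmat M *v a) $ i = \<alpha> * a $ i" for i using a_eig by simp
  then have "(\<Sum>k\<in>UNIV. of_int (M $ i $ k) * a $ k) = \<alpha> * a $ i" for i
    by (simp add: matrix_vector_mult_def rmat_def)
  then have "complex_of_real (\<Sum>k\<in>UNIV. of_int (M $ i $ k) * a $ k) = complex_of_real (\<alpha> * a $ i)" for i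
    by simp
  then have "cmat M *v ca = complex_of_real \<alpha> *s ca"
    by (simp add: vec_eq_iff matrix_vector_mult_def cmat_def ca_def)
  then have T0: "Tm (cmat M) (complex_of_real \<alpha>) ca = 0" by (simp add: Tm_def)
  obtain n where n: "CARD('m) = Suc n" using dim by simp
  have "(Tm (cmat M) (complex_of_real \<alpha>) ^^ Suc n) ca = 0"
    using T0 vec.linear_0[OF linear_Tm_pow] by (simp add: funpow_swap1)
  then show ?thesis using n by (simp add: gen_eigenspace_Tm)
qed

lemma upper_rep:
  assumes "w \<in> vec.span (range b)"
  shows "\<exists>S v. finite S \<and> (\<forall>l\<in>S. Im l > 0 \<and> v l \<in> gen_eigenspace (cmat M) l) \<and> w = (\<Sum>l\<in>S. v l)"
proof -
  have "w \<in> vec.span (\<Union> {gen_eigenspace (cmat M) l | l. mat_eigenvalue (cmat M) l \<and> Im l > 0})"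
    using assms b_span by (simp add: upper_space_def)
  from span_gen_rep[OF this] show ?thesis by blast
qed

lemma indep_main:
  assumes eq: "c *s ca + (\<Sum>j\<in>UNIV. d j *s b j) + (\<Sum>j\<in>UNIV. e j *s cv (b j)) = 0"
  shows "c = 0 \<and> (\<forall>j. d j = 0) \<and> (\<forall>j. e j = 0)"
proof -
  let ?G = "gen_eigenspace (cmat M)"
  define w1 where "w1 = (\<Sum>j\<in>UNIV. d j *s b j)"
  define w2 where "w2 = (\<Sum>j\<in>UNIV. cnj (e j) *s b j)"
  have "w1 \<in> vec.span (range b)" unfolding w1_def
    by (intro vec.span_sum vec.span_scale vec.span_base) auto
  then obtain S1 v1 where S1: "finite S1" "\<forall>l\<in>S1. Im l > 0 \<and> v1 l \<in> ?G l" "w1 = (\<Sum>l\<in>S1. v1 l)"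
    using upper_rep by blast
  have "w2 \<in> vec.span (range b)" unfolding w2_def
    by (intro vec.span_sum vec.span_scale vec.span_base) auto
  then obtain S2 v2 where S2: "finite S2" "\<forall>l\<in>S2. Im l > 0 \<and> v2 l \<in> ?G l" "w2 = (\<Sum>l\<in>S2. v2 l)"
    using upper_rep by blast
  have cw2: "cv w2 = (\<Sum>j\<in>UNIV. e j *s cv (b j))"
    by (simp add: w2_def cv_sum)
  have cw2': "cv w2 = (\<Sum>l\<in>cnj ` S2. cv (v2 (cnj l)))"
    using S2(3) by (simp add: cv_sum sum.reindex inj_on_def)
  define al where "al = complex_of_real \<alpha>"
  define S where "S = insert al (S1 \<union> cnj ` S2)"
  define u where "u l = (if l = al then c *s ca else if Im l > 0 then v1 l else cv (v2 (cnj l)))" for l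
  have Imal: "Im al = 0" by (simp add: al_def)
  have disj1: "al \<notin> S1 \<union> cnj ` S2"
  proof
    assume "al \<in> S1 \<union> cnj ` S2"
    then show False
    proof
      assume "al \<in> S1" then show False using S1(2) Imal by auto
    next
      assume "al \<in> cnj ` S2"
      then obtain x where "x \<in> S2" "al = cnj x" by blast
      then have "Im al = - Im x" by simp
      then show False using S2(2) \<open>x \<in> S2\<close> Imal by auto
    qed
  qed
  have disj2: "S1 \<inter> cnj ` S2 = {}" using S1(2) S2(2) by force
  have "(\<Sum>l\<in>S. u l) = u al + (\<Sum>l\<in>S1. u l) + (\<Sum>l\<in>cnj ` S2. u l)"
    using disj1 disj2 S1(1) S2(1) by (simp add: S_def sum.union_disjoint add.assoc)
  also have "(\<Sum>l\<in>S1. u l) = (\<Sum>l\<in>S1. v1 l)"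
    using S1(2) by (intro sum.cong) (auto simp: u_def al_def)
  also have "(\<Sum>l\<in>cnj ` S2. u l) = (\<Sum>l\<in>cnj ` S2. cv (v2 (cnj l)))"
  proof (intro sum.cong refl)
    fix l assume l: "l \<in> cnj ` S2"
    then obtain x where x: "x \<in> S2" "l = cnj x" by blast
    have "l \<noteq> al" using disj1 l by auto
    moreover have "\<not> Im l > 0" using S2(2) x by auto
    ultimately show "u l = cv (v2 (cnj l))" by (simp add: u_def)
  qed
  finally have "(\<Sum>l\<in>S. u l) = c *s ca + w1 + cv w2"
    using S1(3) cw2' by (simp add: u_def)
  then have sum0: "(\<Sum>l\<in>S. u l) = 0" using eq cw2 by (simp add: w1_def)
  have mem: "\<forall>l\<in>S. u l \<in> ?G l"
  proof
    fix l assume l: "l \<in> S"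
    show "u l \<in> ?G l"
    proof (cases "l = al")
      case True then show ?thesis using ca_gen by (simp add: u_def al_def gen_scale)
    next
      case False
      show ?thesis
      proof (cases "Im l > 0")
        case True
        then have "l \<in> S1" using l False S2(2) by (auto simp: S_def)
        then show ?thesis using S1(2) False True by (simp add: u_def)
      next
        case nIm: False
        then have "l \<in> cnj ` S2" using l False S1(2) by (auto simp: S_def)
        then have "cnj l \<in> S2" by auto
        then have "cv (v2 (cnj l)) \<in> ?G l" using S2(2) cv_gen[of "v2 (cnj l)" M "cnj l"] by simp
        then show ?thesis using False nIm by (simp add: u_def)
      qed
    qed
  qed
  have fin: "finite S" using S1(1) S2(1) by (simp add: S_def)
  have all0: "\<forall>l\<in>S. u l = 0" by (rule gen_direct[OF fin mem sum0])
  have "c *s ca = 0" using all0 by (auto simp: S_def u_def)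
  then have c0: "c = 0" using ca_nz by simp
  have "\<forall>l\<in>S1. v1 l = 0"
  proof
    fix l assume "l \<in> S1"
    then have "l \<in> S" "l \<noteq> al" "Im l > 0" using S1(2) disj1 by (auto simp: S_def)
    then show "v1 l = 0" using all0 by (auto simp: u_def)
  qed
  then have "w1 = 0" using S1(3) by simp
  then have d0: "\<forall>j. d j = 0" using b_coef_zero by (auto simp: w1_def)
  have "\<forall>l\<in>S2. v2 l = 0"
  proof
    fix l assume l: "l \<in> S2"
    then have "cnj l \<in> S" "cnj l \<noteq> al" "\<not> Im (cnj l) > 0" using S2(2) disj1 by (auto simp: S_def)
    then show "v2 l = 0" using all0 by (auto simp: u_def)
  qed
  then have "w2 = 0" using S2(3) by simp
  then have "\<forall>j. cnj (e j) = 0" using b_coef_zero[of "\<lambda>j. cnj (e j)"] by (auto simp: w2_def)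
  then have "\<forall>j. e j = 0" by simp
  then show ?thesis using c0 d0 by blast
qed

definition Psi :: "complex \<times> ((complex^'n) \<times> (complex^'n)) \<Rightarrow> complex^'m" where
  "Psi p = fst p *s ca + (\<Sum>j\<in>UNIV. fst (snd p) $ j *s b j) + (\<Sum>j\<in>UNIV. snd (snd p) $ j *s cv (b j))"

lemma scaleR_vec_smult: "r *\<^sub>R (v::complex^'k) = complex_of_real r *s v"
  by (simp add: vec_eq_iff cscale)

lemma linear_Psi: "linear Psi"
proof (rule linearI)
  show "Psi (x + y) = Psi x + Psi y" for x y
    by (simp add: Psi_def vec.scale_left_distrib sum.distrib algebra_simps)
  show "Psi (r *\<^sub>R x) = r *\<^sub>R Psi x" for r x
    by (simp add: Psi_def scaleR_vec_smult cscale vec.scale_right_distrib vec.scale_sum_right)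
qed

lemma inj_Psi: "inj Psi"
proof -
  have "p = 0" if "Psi p = 0" for p
  proof -
    obtain c d e where p: "p = (c, d, e)" by (cases p) auto
    have "c = 0 \<and> (\<forall>j. d $ j = 0) \<and> (\<forall>j. e $ j = 0)"
      using indep_main[of c "\<lambda>j. d $ j" "\<lambda>j. e $ j"] that by (simp add: Psi_def p)
    then show ?thesis by (simp add: p vec_eq_iff zero_prod_def)
  qed
  then show ?thesis using linear_injective_0[OF linear_Psi] by blast
qed

lemma surj_Psi: "surj Psi"
  by (rule lin_inj_surj_eucl[OF linear_Psi inj_Psi]) (simp add: dim)

definition ell :: "real^'m \<Rightarrow> complex^'m \<Rightarrow> complex" where
  "ell x v = (\<Sum>i\<in>UNIV. complex_of_real (x $ i) * v $ i)"

lemma ell_add: "ell x (u + v) = ell x u + ell x v"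
  by (simp add: ell_def sum.distrib distrib_left)

lemma ell_scale: "ell x (c *s v) = c * ell x v"
  by (simp add: ell_def sum_distrib_left algebra_simps)

lemma ell_zero: "ell x 0 = 0"
  by (simp add: ell_def)

lemma ell_sum: "ell x (\<Sum>j\<in>J. f j) = (\<Sum>j\<in>J. ell x (f j))"
  by (induction J rule: infinite_finite_induct) (simp_all add: ell_add ell_zero)

lemma ell_cv: "ell x (cv v) = cnj (ell x v)"
  by (simp add: ell_def cv_def)

theorem phi_inj': "inj phi"
proof -
  have "x = 0" if px: "phi x = 0" for x
  proof -
    have "fst (phi x) = 0" using px by simp
    then have a0: "(\<Sum>i\<in>UNIV. x $ i * a $ i) = 0" unfolding fst_phi by (simp only: of_real_eq_0_iff)
    have b0: "ell x (b j) = 0" for j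
      using px snd_phi[of x j] by (simp add: ell_def)
    have ca0: "ell x ca = 0"
    proof -
      have "ell x ca = complex_of_real (\<Sum>i\<in>UNIV. x $ i * a $ i)" by (simp add: ell_def ca_def)
      then show ?thesis using a0 by simp
    qed
    have all: "ell x y = 0" for y
    proof -
      obtain p where "y = Psi p" using surj_Psi by (metis surjD)
      then show ?thesis
        by (simp add: Psi_def ell_add ell_scale ell_sum ca0 b0 ell_cv)
    qed
    show "x = 0"
    proof (subst vec_eq_iff, intro allI)
      fix k
      have "ell x (axis k 1) = complex_of_real (x $ k)"
        by (simp add: ell_def axis_def if_distrib cong: if_cong)
      then show "x $ k = 0 $ k" using all[of "axis k 1"] by simp
    qed
  qed
  then show ?thesis using linear_injective_0[OF linear_phi] by blast
qed

end

lemma HC_iff: "p \<in> HC \<longleftrightarrow> Im (fst p) > 0"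
  by (cases p) (simp add: HC_def)

context setting begin

definition F :: "int \<Rightarrow> complex \<times> (complex^'n) \<Rightarrow> complex \<times> (complex^'n) \<Rightarrow> complex \<times> (complex^'n)" where
  "F k v = restrict (\<lambda>p. Dp k p + v) HC"

lemma Im_ofreal_mult: "Im (complex_of_real r * z) = r * Im z"
  by simp

lemma Im_Dp: "Im (fst (Dp k p)) = \<alpha> powi k * Im (fst p)"
  unfolding Dp_fst by (rule Im_ofreal_mult)

lemma Im_Dp_v: "v \<in> Lam \<Longrightarrow> Im (fst (Dp k p + v)) = \<alpha> powi k * Im (fst p)"
  using Im_Dp[of k p] Lam_real[of v] by simp

lemma Dp_HC: "p \<in> HC \<Longrightarrow> v \<in> Lam \<Longrightarrow> Dp k p + v \<in> HC"
  using alpha_pos Im_Dp_v[of v k p] by (simp add: HC_iff)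

lemma Dp_inv1: "Dp (- k) (Dp k p) = p"
proof -
  have "Dp (- k) \<circ> Dp k = id" using Dp_add[of "-k" k] by simp
  then have "(Dp (- k) \<circ> Dp k) p = p" by simp
  then show ?thesis by simp
qed

lemma Dp_inv2: "Dp k (Dp (- k) p) = p"
proof -
  have "Dp k \<circ> Dp (- k) = id" using Dp_add[of k "-k"] by simp
  then have "(Dp k \<circ> Dp (- k)) p = p" by simp
  then show ?thesis by simp
qed

lemma F_Bij: "v \<in> Lam \<Longrightarrow> F k v \<in> Bij HC"
proof -
  assume v: "v \<in> Lam"
  let ?f = "\<lambda>p. Dp k p + v" and ?g = "\<lambda>p. Dp (- k) p + Dp (- k) (- v)"
  have g: "?g p = Dp (- k) (p - v)" for p
    using linear_add[OF linear_Dp, of "-k" p "- v"] by simp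
  have w: "Dp (- k) (- v) \<in> Lam" using v by (intro Lam_Dp Lam_uminus)
  have "bij_betw ?f HC HC"
  proof (rule bij_betw_byWitness[where f' = ?g])
    show "\<forall>p\<in>HC. ?g (?f p) = p" unfolding g by (simp add: Dp_inv1)
    show "\<forall>p\<in>HC. ?f (?g p) = p" unfolding g by (simp add: Dp_inv2)
    show "?f ` HC \<subseteq> HC" using Dp_HC v by blast
    show "?g ` HC \<subseteq> HC" using Dp_HC w by blast
  qed
  then have "bij_betw (F k v) HC HC"
    unfolding F_def by (rule bij_betw_cong[THEN iffD1, rotated]) simp
  then show ?thesis by (simp add: Bij_def F_def)
qed

lemma F_comp:
  assumes "w \<in> Lam"
  shows "compose HC (F k v) (F l w) = F (k + l) (Dp k w + v)"
proof -
  have "Dp k (Dp l p + w) + v = Dp (k + l) p + (Dp k w + v)" for p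
    using linear_add[OF linear_Dp, of k "Dp l p" w] Dp_add[of k l] by (simp add: algebra_simps)
  then show ?thesis
    using Dp_HC[OF _ assms] by (auto simp: compose_def F_def fun_eq_iff)
qed

lemma F_mult:
  assumes "v \<in> Lam" "w \<in> Lam"
  shows "F k v \<otimes>\<^bsub>BijGroup HC\<^esub> F l w = F (k + l) (Dp k w + v)"
  using F_Bij[OF assms(1)] F_Bij[OF assms(2)] F_comp[OF assms(2)]
  by (simp add: BijGroup_def)

lemma F_one: "\<one>\<^bsub>BijGroup HC\<^esub> = F 0 0"
  by (simp add: BijGroup_def F_def)

lemma F_inv:
  assumes "v \<in> Lam"
  shows "inv\<^bsub>BijGroup HC\<^esub> (F k v) = F (- k) (- Dp (- k) v)"
proof -
  have w: "- Dp (- k) v \<in> Lam" using assms by (intro Lam_Dp Lam_uminus)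
  have "F (- k) (- Dp (- k) v) \<otimes>\<^bsub>BijGroup HC\<^esub> F k v = F 0 0"
    using F_mult[OF w assms, of "-k" k] by simp
  then show ?thesis
  proof (intro group.inv_equality[OF group_BijGroup])
    assume "F (- k) (- Dp (- k) v) \<otimes>\<^bsub>BijGroup HC\<^esub> F k v = F 0 0"
    then show "F (- k) (- Dp (- k) v) \<otimes>\<^bsub>BijGroup HC\<^esub> F k v = \<one>\<^bsub>BijGroup HC\<^esub>"
      using F_one by simp
    show "F k v \<in> carrier (BijGroup HC)" using F_Bij[OF assms] by (simp add: BijGroup_def)
    show "F (- k) (- Dp (- k) v) \<in> carrier (BijGroup HC)" using F_Bij[OF w] by (simp add: BijGroup_def)
  qed
qed

lemma gen0_F: "restrict (gen0 \<alpha> R) HC = F 1 0"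
proof -
  have "Dp 1 = D" using Dp_succ[of 0] by simp
  then show ?thesis
    by (auto simp: F_def gen0_def D_def L_def fun_eq_iff)
qed

lemma gentr_F: "restrict (gentr a b i) HC = F 0 (uvec a b i)"
  by (simp add: F_def gentr_def)

lemma GM_F: "g \<in> GM \<alpha> R a b \<Longrightarrow> \<exists>k v. v \<in> Lam \<and> g = F k v"
  unfolding GM_def
proof (induction rule: generate.induct[case_names one incl inverse eng])
  case one
  then show ?case using Lam_0 F_one by blast
next
  case (incl h)
  then have "h = F 1 0 \<or> (\<exists>i. h = F 0 (uvec a b i))" using gen0_F gentr_F by auto
  then show ?case using Lam_0 Lam_uvec by blast
next
  case (inverse h)
  then have "h = F 1 0 \<or> (\<exists>i. h = F 0 (uvec a b i))" using gen0_F gentr_F by auto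
  then have "\<exists>k v. v \<in> Lam \<and> h = F k v" using Lam_0 Lam_uvec by blast
  then obtain k v where "v \<in> Lam" "h = F k v" by blast
  then show ?case using F_inv[of v k] Lam_Dp Lam_uminus by blast
next
  case (eng h1 h2)
  then obtain k v l w where "v \<in> Lam" "h1 = F k v" "w \<in> Lam" "h2 = F l w" by blast
  then show ?case using F_mult[of v w k l] Lam_Dp Lam_add by blast
qed

lemma powi_ln: "ln (\<alpha> powi k) = of_int k * ln \<alpha>"
proof -
  have "\<alpha> powi k = exp (ln \<alpha>) powi k" using alpha_pos by simp
  also have "\<dots> = exp (of_int k * ln \<alpha>)" by (rule exp_power_int)
  finally show ?thesis by simp
qed

lemma powi_ne1: "k \<noteq> 0 \<Longrightarrow> \<alpha> powi k \<noteq> 1"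
proof
  assume "k \<noteq> 0" "\<alpha> powi k = 1"
  then have "of_int k * ln \<alpha> = 0" using powi_ln[of k] by simp
  moreover have "ln \<alpha> \<noteq> 0" using alpha_pos alpha_ne1 by simp
  ultimately show False using \<open>k \<noteq> 0\<close> by simp
qed

theorem free: "free_action HC (GM \<alpha> R a b)"
  unfolding free_action_def
proof (intro ballI impI)
  fix g p assume g: "g \<in> GM \<alpha> R a b" and p: "p \<in> HC" and fx: "g p = p"
  obtain k v where v: "v \<in> Lam" and gF: "g = F k v" using GM_F[OF g] by blast
  have eq: "Dp k p + v = p" using fx p by (simp add: gF F_def)
  have "k = 0"
  proof (rule ccontr)
    assume "k \<noteq> 0"
    have "Im (fst p) = \<alpha> powi k * Im (fst p)"
      using Im_Dp_v[OF v, of k p] unfolding eq .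
    then have "(\<alpha> powi k - 1) * Im (fst p) = 0" by (simp add: algebra_simps)
    then show False using powi_ne1[OF \<open>k \<noteq> 0\<close>] p by (simp add: HC_iff)
  qed
  then have "v = 0" using eq by simp
  then show "g = (\<lambda>x\<in>HC. x)" using \<open>k = 0\<close> by (simp add: gF F_def)
qed

end

context setting begin

lemma finite_Zv_ball: "finite (Zv \<inter> cball 0 r)"
proof -
  define N where "N = \<lceil>r\<rceil>"
  let ?T = "PiE (UNIV :: 'm set) (\<lambda>_. {-N..N})"
  have "Zv \<inter> cball 0 r \<subseteq> (\<lambda>f. \<chi> i. real_of_int (f i)) ` ?T"
  proof
    fix x assume x: "x \<in> Zv \<inter> cball 0 r"
    define f where "f i = \<lfloor>x $ i\<rfloor>" for i
    have xi: "real_of_int (f i) = x $ i" for i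
      using x by (auto simp: Zv_def f_def elim!: Ints_cases)
    have xr: "\<bar>x $ i\<bar> \<le> r" for i
      using x component_le_norm_cart[of x i] by (auto simp: dist_norm)
    then have "f i \<in> {-N..N}" for i
    proof -
      have "real_of_int \<bar>f i\<bar> \<le> r" using xi[of i] xr[of i] by simp
      also have "r \<le> real_of_int N" unfolding N_def by (rule le_of_int_ceiling)
      finally have "\<bar>f i\<bar> \<le> N" by linarith
      then show ?thesis by auto
    qed
    then have "f \<in> ?T" by auto
    moreover have "x = (\<chi> i. real_of_int (f i))" using xi by (simp add: vec_eq_iff)
    ultimately show "x \<in> (\<lambda>f. \<chi> i. real_of_int (f i)) ` ?T" by blast
  qed
  moreover have "finite ?T" by (intro finite_PiE) auto
  ultimately show ?thesis by (meson finite_imageI finite_subset)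
qed

lemma phi_inj: "inj phi"
  by (rule phi_inj')

lemma finite_Lam_bounded:
  assumes "bounded S"
  shows "finite (Lam \<inter> S)"
proof -
  obtain B where B: "B > 0" "\<And>x. B * norm x \<le> norm (phi x)"
    using linear_inj_bounded_below_pos[OF linear_phi phi_inj] by blast
  obtain r where r: "\<And>y. y \<in> S \<Longrightarrow> norm y \<le> r" using assms by (auto simp: bounded_iff)
  have "Lam \<inter> S \<subseteq> phi ` (Zv \<inter> cball 0 (r / B))"
  proof
    fix y assume y: "y \<in> Lam \<inter> S"
    then obtain x where x: "x \<in> Zv" "y = phi x" by (auto simp: Lam_def)
    have "B * norm x \<le> r" using B(2)[of x] r[of y] y x by simp
    then have "norm x \<le> r / B" using B(1) by (simp add: field_simps)
    then show "y \<in> phi ` (Zv \<inter> cball 0 (r / B))" using x by auto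
  qed
  then show ?thesis using finite_Zv_ball by (meson finite_imageI finite_subset)
qed

lemma continuous_Dp: "continuous_on UNIV (Dp k)"
  using linear_continuous_on linear_conv_bounded_linear linear_Dp by blast

theorem pd: "properly_discontinuous HC (GM \<alpha> R a b)"
  unfolding properly_discontinuous_def
proof (intro allI impI)
  fix K :: "(complex \<times> (complex^'n)) set"
  assume "compact K \<and> K \<subseteq> HC"
  then have K: "compact K" "K \<subseteq> HC" by auto
  show "finite {g \<in> GM \<alpha> R a b. g ` K \<inter> K \<noteq> {}}"
  proof (cases "K = {}")
    case True then show ?thesis by simp
  next
    case False
    let ?f = "\<lambda>p::complex \<times> (complex^'n). Im (fst p)"
    have cf: "continuous_on K ?f" by (intro continuous_intros)
    obtain p0 where p0: "p0 \<in> K" "\<And>y. y \<in> K \<Longrightarrow> ?f p0 \<le> ?f y"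
      using continuous_attains_inf[OF K(1) False cf] by blast
    obtain p1 where p1: "p1 \<in> K" "\<And>y. y \<in> K \<Longrightarrow> ?f y \<le> ?f p1"
      using continuous_attains_sup[OF K(1) False cf] by blast
    define c where "c = ?f p0"
    define C where "C = ?f p1"
    have c0: "c > 0" using p0 K(2) by (auto simp: c_def HC_iff)
    have cC: "\<And>y. y \<in> K \<Longrightarrow> c \<le> ?f y \<and> ?f y \<le> C" using p0 p1 by (auto simp: c_def C_def)
    have lna: "\<bar>ln \<alpha>\<bar> > 0" using alpha_pos alpha_ne1 by simp
    define N where "N = \<lceil>(ln C - ln c) / \<bar>ln \<alpha>\<bar>\<rceil>"
    define S where "S = (\<Union>k\<in>{-N..N}. (\<lambda>x. fst x - Dp k (snd x)) ` (K \<times> K))"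
    have "compact S"
      unfolding S_def
    proof (intro compact_UN finite_atLeastAtMost_int)
      fix k
      have "continuous_on (K \<times> K) (\<lambda>x. Dp k (snd x))"
        by (rule continuous_on_compose2[OF continuous_Dp continuous_on_snd]) auto
      then have "continuous_on (K \<times> K) (\<lambda>x. fst x - Dp k (snd x))"
        by (intro continuous_intros)
      then show "compact ((\<lambda>x. fst x - Dp k (snd x)) ` (K \<times> K))"
        by (intro compact_continuous_image compact_Times K(1))
    qed
    then have fin: "finite (Lam \<inter> S)" by (intro finite_Lam_bounded compact_imp_bounded)
    have "{g \<in> GM \<alpha> R a b. g ` K \<inter> K \<noteq> {}} \<subseteq> (\<lambda>(k, v). F k v) ` ({-N..N} \<times> (Lam \<inter> S))"
    proof
      fix g assume "g \<in> {g \<in> GM \<alpha> R a b. g ` K \<inter> K \<noteq> {}}"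
      then have g: "g \<in> GM \<alpha> R a b" "g ` K \<inter> K \<noteq> {}" by auto
      obtain k v where v: "v \<in> Lam" and gF: "g = F k v" using GM_F[OF g(1)] by blast
      obtain p where p: "p \<in> K" "g p \<in> K" using g(2) by auto
      define q where "q = g p"
      have q: "q = Dp k p + v" using p K(2) by (auto simp: q_def gF F_def)
      have fp: "c \<le> ?f p" "?f p \<le> C" using cC p(1) by auto
      have fq: "c \<le> ?f q" "?f q \<le> C" using cC p(2) by (auto simp: q_def)
      have "?f q = \<alpha> powi k * ?f p" using q Im_Dp_v[OF v] by simp
      then have "\<alpha> powi k = ?f q / ?f p" using fp c0 by simp
      then have "of_int k * ln \<alpha> = ln (?f q) - ln (?f p)"
        using powi_ln[of k] fp fq c0 by (simp add: ln_div)
      moreover have "ln c \<le> ln (?f p)" "ln (?f p) \<le> ln C" "ln c \<le> ln (?f q)" "ln (?f q) \<le> ln C"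
        using fp fq c0 by simp_all
      ultimately have "\<bar>of_int k * ln \<alpha>\<bar> \<le> ln C - ln c" by linarith
      then have "\<bar>of_int k\<bar> * \<bar>ln \<alpha>\<bar> \<le> ln C - ln c" by (simp add: abs_mult)
      then have "\<bar>real_of_int k\<bar> \<le> (ln C - ln c) / \<bar>ln \<alpha>\<bar>" using lna by (simp add: field_simps)
      also have "\<dots> \<le> real_of_int N" unfolding N_def by (rule le_of_int_ceiling)
      finally have "\<bar>k\<bar> \<le> N" by linarith
      then have k: "k \<in> {-N..N}" by auto
      have "v = fst (q, p) - Dp k (snd (q, p))" using q by simp
      moreover have "(q, p) \<in> K \<times> K" using p by (simp add: q_def)
      ultimately have "v \<in> (\<lambda>x. fst x - Dp k (snd x)) ` (K \<times> K)" by blast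
      then have "v \<in> S" unfolding S_def using k by blast
      then show "g \<in> (\<lambda>(k, v). F k v) ` ({-N..N} \<times> (Lam \<inter> S))"
        using k v gF by force
    qed
    moreover have "finite ((\<lambda>(k, v). F k v) ` ({-N..N} \<times> (Lam \<inter> S)))"
      using fin by simp
    ultimately show ?thesis by (rule finite_subset)
  qed
qed

end

theorem proposition2p7:
  fixes M :: "int^('m::finite)^'m" and \<alpha> :: real and a :: "real^'m"
    and b :: "('n::finite) \<Rightarrow> complex^'m" and R :: "complex^'n^'n"
  assumes dim: "CARD('m) = 2 * CARD('n) + 1"
    and SL: "det M = 1"
    and unique_real: "\<forall>l. (mat_eigenvalue (cmat M) l \<and> Im l = 0) \<longleftrightarrow> l = complex_of_real \<alpha>"
    and alpha_pos: "\<alpha> > 0" and alpha_ne1: "\<alpha> \<noteq> 1"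
    and simple: "Polynomial.order (complex_of_real \<alpha>) (charpoly (cmat M)) = 1"
    and a_nz: "a \<noteq> 0" and a_eig: "rmat M *v a = \<alpha> *s a"
    and b_inj: "inj b" and b_indep: "vec.independent (range b)"
    and b_span: "vec.span (range b) = upper_space (cmat M)"
    and R_def: "\<forall>j. cmat M *v b j = (\<Sum>l\<in>UNIV. R $ l $ j *s b l)"
  shows "free_action HC (GM \<alpha> R a b) \<and> properly_discontinuous HC (GM \<alpha> R a b)"
  proof -
  interpret setting M \<alpha> a b R
    by unfold_locales (fact dim SL alpha_pos alpha_ne1 a_nz a_eig b_inj b_indep b_span R_def)+
  show ?thesis using free pd by blast
qed

end
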